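(* Let $d\ge1$ be an integer, and let $Q_1,\dots,Q_\ell$ be a sequence of subsets of $V$, each of size $1$ or $2$. For every offline vertex $i$, $$\mu^i(Q_1,Q_2,\dots,Q_\ell)=\mu^i(Q_\ell,Q_{\ell-1},\dots,Q_1).$$ Here $\mu^i(R_1,\dots,R_k)$ denotes the expected number of rounds in which $i$ is matched when Algorithm 1 is run on the proposal sequence $R_1,\dots,R_k$.
   Context: Online correlated rental setting: there is a finite set $V$ of offline vertices and an integer $d\ge1$. A sequence of proposals (subsets of $V$ of size $1$ or $2$) is fixed in advance and revealed one per round; at each round the algorithm selects one vertex of the current proposal. An offline vertex $i$ is matched at round $j$ if it is selected at round $j$ and was not matched at any round $t$ with $j-d<t<j$. Algorithm 1: it keeps a state $\tau_{i,t}\in\{\mathrm{sel},\mathrm{nsel},\mathrm{unk}\}$ for every $i$ and round $t$, initially all $\mathrm{unk}$. All random draws are fresh and independent. "Reset $i$" at round $j$ means setting $\tau_{i,t}=\mathrm{unk}$ for all $t\in[j+1,j+d-1]$. (1) If the proposal at round $j$ is $\{i_1\}$: reset $i_1$ and select $i_1$. (2) If the proposal is $\{i_1,i_2\}$: with probability $1/2$ the round is a sender, and otherwise it is a receiver. - Sender: draw $\ell,m\in\{1,2\}$ independently and uniformly. Reset $i_{3-m}$. Set $\tau_{i_m,t}=\mathrm{sel}$ for all $t\in[j+1,j+d-1]$ if $\ell=m$, and $\mathrm{nsel}$ otherwise. Select $i_\ell$. - Receiver: draw $m\in\{1,2\}$ uniformly. If $\tau_{i_m,j}=\mathrm{sel}$,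 let $\ell=3-m$; if $\tau_{i_m,j}=\mathrm{nsel}$, let $\ell=m$; otherwise draw $\ell$ uniformly from $\{1,2\}$. Reset $i_1,i_2$. Select $i_\ell$. *)

theory Defs
  imports "HOL-Probability.Probability"
begin

datatype tau = Sel | NSel | Unk

type_synonym 'v state = "'v \<Rightarrow> nat \<Rightarrow> tau"

definition set_range :: "nat \<Rightarrow> nat \<Rightarrow> 'v \<Rightarrow> tau \<Rightarrow> 'v state \<Rightarrow> 'v state" where
  "set_range d j i x \<tau> = (\<lambda>v t. if v = i \<and> j + 1 \<le> t \<and> t \<le> j + d - 1 then x else \<tau> v t)"

definition reset :: "nat \<Rightarrow> nat \<Rightarrow> 'v \<Rightarrow> 'v state \<Rightarrow> 'v state" where
  "reset d j i \<tau> = set_range d j i Unk \<tau>"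

definition unif12 :: "nat pmf" where
  "unif12 = pmf_of_set {1, 2}"

definition step :: "nat \<Rightarrow> nat \<Rightarrow> 'v list \<Rightarrow> 'v state \<Rightarrow> ('v state \<times> 'v) pmf" where
  "step d j ps \<tau> =
    (if length ps = 1 then return_pmf (reset d j (ps ! 0) \<tau>, ps ! 0)
     else
       (let pick = (\<lambda>k::nat. if k = 1 then ps ! 0 else ps ! 1) in
        do {
          sender \<leftarrow> bernoulli_pmf (1/2);
          if sender then do {
            l \<leftarrow> unif12;
            m \<leftarrow> unif12;
            let \<tau>1 = reset d j (pick (3 - m)) \<tau>;
            let \<tau>2 = set_range d j (pick m) (if l = m then Sel else NSel) \<tau>1;
            return_pmf (\<tau>2, pick l)
          } else do {
            m \<leftarrow> unif12;
            l \<leftarrow> (case \<tau> (pick m) j of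
                    Sel \<Rightarrow> return_pmf (3 - m)
                  | NSel \<Rightarrow> return_pmf m
                  | Unk \<Rightarrow> unif12);
            return_pmf (reset d j (pick 2) (reset d j (pick 1) \<tau>), pick l)
          }
        }))"

fun run :: "nat \<Rightarrow> nat \<Rightarrow> 'v list list \<Rightarrow> 'v state \<Rightarrow> 'v list pmf" where
  "run d j [] \<tau> = return_pmf []"
| "run d j (ps # pss) \<tau> =
     do { (\<tau>', s) \<leftarrow> step d j ps \<tau>; ss \<leftarrow> run d (j + 1) pss \<tau>'; return_pmf (s # ss) }"

definition enum_set :: "'v set \<Rightarrow> 'v list" where
  "enum_set Q = (SOME xs. distinct xs \<and> set xs = Q)"

function matched :: "nat \<Rightarrow> 'v list \<Rightarrow> 'v \<Rightarrow> nat \<Rightarrow> bool" where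
  "matched d sel i j =
     (1 \<le> j \<and> j \<le> length sel \<and> sel ! (j - 1) = i \<and>
      (\<forall>t\<in>{j - d<..<j}. \<not> matched d sel i t))"
  by auto
termination by (relation "Wellfounded.measure (\<lambda>(d, sel, i, j). j)") auto

definition num_matched :: "nat \<Rightarrow> 'v list \<Rightarrow> 'v \<Rightarrow> nat" where
  "num_matched d sel i = card {j \<in> {1..length sel}. matched d sel i j}"

definition mu :: "nat \<Rightarrow> 'v set list \<Rightarrow> 'v \<Rightarrow> real" where
  "mu d Qs i = measure_pmf.expectation (run d 1 (map enum_set Qs) (\<lambda>_ _. Unk))
                 (\<lambda>sel. real (num_matched d sel i))"

end

theory Submission
  imports Defs
begin


definition pick :: "'v list \<Rightarrow> nat \<Rightarrow> 'v" where
  "pick ps m = (if m = 1 then ps ! 0 else ps ! 1)"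

definition other :: "'v list \<Rightarrow> 'v \<Rightarrow> 'v" where
  "other ps v = (if v = ps ! 0 then ps ! 1 else ps ! 0)"

definition cfgs :: "(bool \<times> nat) set" where "cfgs = UNIV \<times> {1,2}"

definition nst :: "nat \<Rightarrow> nat \<Rightarrow> 'v list \<Rightarrow> bool \<times> nat \<Rightarrow> 'v \<Rightarrow> 'v state \<Rightarrow> 'v state" where
  "nst d j ps c x \<tau> = (if length ps = 1 then reset d j (ps!0) \<tau>
     else if fst c then set_range d j (pick ps (snd c)) (if x = pick ps (snd c) then Sel else NSel)
                (reset d j (pick ps (3 - snd c)) \<tau>)
     else reset d j (pick ps 2) (reset d j (pick ps 1) \<tau>))"

definition tinfo :: "tau \<Rightarrow> bool option" where
  "tinfo t = (case t of Sel \<Rightarrow> Some True | NSel \<Rightarrow> Some False | Unk \<Rightarrow> None)"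

definition fval :: "'v list \<Rightarrow> bool \<times> nat \<Rightarrow> bool option \<Rightarrow> 'v \<Rightarrow> real" where
  "fval ps c io x = (if length ps = 1 then (if x = ps!0 then 1/4 else 0)
     else if fst c then (if x \<in> set ps then 1/8 else 0)
     else (case io of None \<Rightarrow> (if x \<in> set ps then 1/8 else 0)
       | Some bt \<Rightarrow> (if x = (if bt then other ps (pick ps (snd c)) else pick ps (snd c)) then 1/4 else 0)))"

definition fac0 :: "nat \<Rightarrow> 'v list \<Rightarrow> 'v state \<Rightarrow> bool \<times> nat \<Rightarrow> 'v \<Rightarrow> real" where
  "fac0 j ps \<tau> c x = fval ps c (tinfo (\<tau> (pick ps (snd c)) j)) x"

definition wfps :: "'v list \<Rightarrow> bool" where
  "wfps ps = (length ps = 1 \<or> (length ps = 2 \<and> ps!0 \<noteq> ps!1))"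

lemma exp_eq_pmf: "measure_pmf.expectation p (\<lambda>x. of_bool (x = s)) = pmf p s"
proof -
  have "(\<lambda>x. of_bool (x = s)::real) = indicator {s}" by (auto simp: indicator_def)
  then show ?thesis by (simp add: measure_pmf_single)
qed

lemma run_cons_pmf:
  "pmf (run d j (ps # pss) \<tau>) (x # s) =
     measure_pmf.expectation (step d j ps \<tau>) (\<lambda>(\<tau>', y). if y = x then pmf (run d (j+1) pss \<tau>') s else 0)"
  apply (simp add: pmf_bind split_def)
  apply (rule Bochner_Integration.integral_cong, simp)
  apply (auto simp: pmf_bind indicator_def exp_eq_pmf)
  done

lemma pmf_cons_bind: "pmf (p \<bind> (\<lambda>ss. return_pmf (y # ss))) (x # s) = (if y = x then pmf p s else 0)"
  by (simp add: pmf_bind indicator_def exp_eq_pmf[of p s, symmetric] cong: if_cong)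

lemma sum_cfgs: "(\<Sum>c\<in>cfgs. f c) = f (True,1) + f (True,2) + f (False,1) + f (False,2)"
proof -
  have "cfgs = {(True,1),(True,2),(False,1),(False,2)}" by (auto simp: cfgs_def)
  show ?thesis unfolding \<open>cfgs = _\<close> by (simp add: add.assoc)
qed

lemma pmf_bind_bern: "pmf (bernoulli_pmf (1/2) \<bind> f) x = (pmf (f True) x + pmf (f False) x) / 2"
  by (simp add: pmf_bind)

lemma pmf_bind_12: "pmf (pmf_of_set {Suc 0, 2} \<bind> f) x = (pmf (f 1) x + pmf (f 2) x) / 2"
  by (simp add: pmf_bind_pmf_of_set)

lemma set2: "length ps = 2 \<Longrightarrow> set ps = {ps!0, ps!1}"
  by (cases ps; cases "tl ps"; auto)

lemma head:
  assumes "wfps ps"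
  shows "pmf (run d j (ps # pss) \<tau>) (x # s) =
     (\<Sum>c\<in>cfgs. fac0 j ps \<tau> c x * pmf (run d (j+1) pss (nst d j ps c x \<tau>)) s)"
proof (cases "length ps = 1")
  case True
  then show ?thesis
    unfolding run_cons_pmf
    apply (simp add: step_def cfgs_def fac0_def fval_def nst_def)
    done
next
  case False
  then have l2: "length ps = 2" and dd: "ps!0 \<noteq> ps!1" using assms by (auto simp: wfps_def)
  show ?thesis using l2 dd
    apply (subst run.simps)
    apply (simp only: step_def Let_def if_not_P[OF False])
    apply (simp only: bind_assoc_pmf bind_return_pmf if_distrib[of "\<lambda>p. bind_pmf p _"]
       tau.case_distrib[of "\<lambda>p. bind_pmf p _"] prod.case)
    apply (simp only: if_False numeral_eq_one_iff semiring_norm(85) unif12_def)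
    apply (cases "\<tau> (ps!0) j"; cases "\<tau> (ps!1) j"; cases "x = ps!0"; cases "x = ps!1")
    apply (simp_all add: set2 pmf_bind_bern pmf_bind_12 pmf_cons_bind sum_cfgs fac0_def fval_def nst_def pick_def other_def tinfo_def del: run.simps)
    done
qed

fun prevapp :: "'v list list \<Rightarrow> nat \<Rightarrow> 'v \<Rightarrow> nat option" where
  "prevapp pss 0 v = None"
| "prevapp pss (Suc k) v = (if v \<in> set (pss!k) then Some k else prevapp pss k v)"

definition info :: "nat \<Rightarrow> nat \<Rightarrow> 'v list list \<Rightarrow> 'v state \<Rightarrow> (bool \<times> nat) list \<Rightarrow> 'v list \<Rightarrow> nat \<Rightarrow> 'v \<Rightarrow> bool option" where
  "info d j0 pss \<tau> cs s k v = (case prevapp pss k v of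
      Some k' \<Rightarrow> (if length (pss!k') = 2 \<and> fst (cs!k') \<and> pick (pss!k') (snd (cs!k')) = v \<and> j0 + k \<le> j0 + k' + d - 1
                 then Some (s!k' = v) else None)
    | None \<Rightarrow> tinfo (\<tau> v (j0 + k)))"

definition fac :: "nat \<Rightarrow> nat \<Rightarrow> 'v list list \<Rightarrow> 'v state \<Rightarrow> (bool \<times> nat) list \<Rightarrow> 'v list \<Rightarrow> nat \<Rightarrow> real" where
  "fac d j0 pss \<tau> cs s k = fval (pss!k) (cs!k) (info d j0 pss \<tau> cs s k (pick (pss!k) (snd (cs!k)))) (s!k)"

definition W :: "nat \<Rightarrow> nat \<Rightarrow> 'v list list \<Rightarrow> 'v state \<Rightarrow> (bool \<times> nat) list \<Rightarrow> 'v list \<Rightarrow> real" where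
  "W d j0 pss \<tau> cs s = (\<Prod>k<length pss. fac d j0 pss \<tau> cs s k)"

definition Inv :: "nat \<Rightarrow> nat \<Rightarrow> 'v state \<Rightarrow> bool" where
  "Inv d j \<tau> = (\<forall>v t. j + d - 1 \<le> t \<longrightarrow> \<tau> v t = Unk)"

definition cfgl :: "nat \<Rightarrow> (bool \<times> nat) list set" where
  "cfgl n = {cs. length cs = n \<and> set cs \<subseteq> cfgs}"

lemma prevapp_Cons: "prevapp (ps#pss) (Suc k) v =
   (case prevapp pss k v of Some k' \<Rightarrow> Some (Suc k') | None \<Rightarrow> if v \<in> set ps then Some 0 else None)"
  by (induction k) auto

lemma pick_in: "wfps ps \<Longrightarrow> m \<in> {1,2} \<Longrightarrow> length ps = 2 \<Longrightarrow> pick ps m \<in> set ps"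
  by (auto simp: pick_def wfps_def)

lemma nst_notin: "wfps ps \<Longrightarrow> v \<notin> set ps \<Longrightarrow> nst d j ps c x \<tau> v t = \<tau> v t"
  by (auto simp: nst_def wfps_def set_range_def reset_def pick_def set2)

lemma nst_in:
  assumes "wfps ps" "c \<in> cfgs" "Inv d j \<tau>" "v \<in> set ps" "j + 1 \<le> t"
  shows "tinfo (nst d j ps c x \<tau> v t) =
     (if length ps = 2 \<and> fst c \<and> pick ps (snd c) = v \<and> t \<le> j + d - 1 then Some (x = v) else None)"
proof -
  have U: "\<tau> v t = Unk" if "\<not> t \<le> j + d - 1" using assms(3) that by (auto simp: Inv_def)
  show ?thesis
  proof (cases "length ps = 1")
    case True
    then have "v = ps!0" using assms(4) by (cases ps) auto
    then show ?thesis using True U assms(5) by (auto simp: nst_def reset_def set_range_def tinfo_def)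
  next
    case False
    then have l2: "length ps = 2" and dd: "ps!0 \<noteq> ps!1" using assms(1) by (auto simp: wfps_def)
    obtain b m where c: "c = (b,m)" "m \<in> {1,2}" using assms(2) by (auto simp: cfgs_def)
    have v: "v = ps!0 \<or> v = ps!1" using assms(4) set2[OF l2] by auto
    show ?thesis using False l2 dd c v U assms(5)
      by (cases b; cases "t \<le> j + d - 1"; auto simp: nst_def reset_def set_range_def tinfo_def pick_def)
  qed
qed

lemma info_shift:
  assumes "wfps ps" "c \<in> cfgs" "Inv d j \<tau>"
  shows "info d j (ps#pss) \<tau> (c#cs) (x#s) (Suc k) v = info d (Suc j) pss (nst d j ps c x \<tau>) cs s k v"
proof (cases "prevapp pss k v")
  case (Some k')
  then show ?thesis by (simp add: info_def prevapp_Cons del: prevapp.simps)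
next
  case None
  show ?thesis
  proof (cases "v \<in> set ps")
    case True
    then show ?thesis using None nst_in[OF assms True, of "Suc j + k" x]
      by (simp add: info_def prevapp_Cons del: prevapp.simps)
  next
    case False
    then show ?thesis using None nst_notin[OF assms(1) False]
      by (simp add: info_def prevapp_Cons del: prevapp.simps)
  qed
qed

lemma fac_shift:
  assumes "wfps ps" "c \<in> cfgs" "Inv d j \<tau>"
  shows "fac d j (ps#pss) \<tau> (c#cs) (x#s) (Suc k) = fac d (Suc j) pss (nst d j ps c x \<tau>) cs s k"
  using info_shift[OF assms] by (simp add: fac_def)

lemma fac_0: "fac d j (ps#pss) \<tau> (c#cs) (x#s) 0 = fac0 j ps \<tau> c x"
  by (simp add: fac_def fac0_def info_def)

lemma W_Cons:
  assumes "wfps ps" "c \<in> cfgs" "Inv d j \<tau>"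
  shows "W d j (ps#pss) \<tau> (c#cs) (x#s) = fac0 j ps \<tau> c x * W d (Suc j) pss (nst d j ps c x \<tau>) cs s"
  unfolding W_def length_Cons prod.lessThan_Suc_shift by (simp add: fac_0 fac_shift[OF assms])

lemma Inv_nst: "Inv d j \<tau> \<Longrightarrow> Inv d (Suc j) (nst d j ps c x \<tau>)"
  by (auto simp: Inv_def nst_def set_range_def reset_def)

lemma finite_cfgl: "finite (cfgl n)"
proof -
  have "finite cfgs" by (simp add: cfgs_def)
  then show ?thesis unfolding cfgl_def
    by (rule rev_finite_subset[OF finite_lists_length_eq[of cfgs n]]) auto
qed

lemma sum_cfgl_Suc: "(\<Sum>cs\<in>cfgl (Suc n). f cs) = (\<Sum>c\<in>cfgs. \<Sum>cs\<in>cfgl n. f (c#cs))"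
proof -
  have e: "cfgl (Suc n) = (\<lambda>(c,cs). c#cs) ` (cfgs \<times> cfgl n)"
    by (auto simp: cfgl_def length_Suc_conv image_iff)
  have i: "inj_on (\<lambda>(c,cs). c#cs) (cfgs \<times> cfgl n)" by (auto simp: inj_on_def)
  have "finite cfgs" by (simp add: cfgs_def)
  show ?thesis
    apply (simp only: e sum.reindex[OF i] sum.cartesian_product)
    apply (simp add: comp_def split_def)
    done
qed

lemma pmf_nil_bind: "pmf (p \<bind> (\<lambda>ss. return_pmf (y # ss))) [] = 0"
  by (simp add: pmf_bind indicator_def)

lemma runA:
  "\<forall>ps\<in>set pss. wfps ps \<Longrightarrow> Inv d j \<tau> \<Longrightarrow>
   pmf (run d j pss \<tau>) s = (if length s = length pss then (\<Sum>cs\<in>cfgl (length pss). W d j pss \<tau> cs s) else 0)"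
proof (induction pss arbitrary: j \<tau> s)
  case Nil
  have "cfgl 0 = {[]}" by (auto simp: cfgl_def)
  then show ?case by (simp add: W_def indicator_def)
next
  case (Cons ps pss)
  show ?case
  proof (cases s)
    case Nil
    then show ?thesis by (simp add: pmf_bind split_def pmf_nil_bind)
  next
    case (Cons x s')
    have wf: "wfps ps" using Cons.prems by auto
    have "pmf (run d j (ps # pss) \<tau>) (x # s') =
       (\<Sum>c\<in>cfgs. fac0 j ps \<tau> c x * pmf (run d (j+1) pss (nst d j ps c x \<tau>)) s')"
      by (rule head[OF wf])
    also have "\<dots> = (\<Sum>c\<in>cfgs. fac0 j ps \<tau> c x *
         (if length s' = length pss then (\<Sum>cs\<in>cfgl (length pss). W d (Suc j) pss (nst d j ps c x \<tau>) cs s') else 0))"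
      using Cons.prems by (intro sum.cong refl) (simp add: Cons.IH[OF _ Inv_nst[OF Cons.prems(2)]])
    also have "\<dots> = (if length (x#s') = length (ps#pss) then (\<Sum>cs\<in>cfgl (length (ps#pss)). W d j (ps#pss) \<tau> cs (x#s')) else 0)"
      by (auto simp: sum_cfgl_Suc W_Cons[OF wf _ Cons.prems(2)] sum_distrib_left intro!: sum.cong)
    finally show ?thesis using Cons by simp
  qed
qed


lemma prevapp_Some: "prevapp pss k v = Some a \<longleftrightarrow> (a < k \<and> v \<in> set (pss!a) \<and> (\<forall>i. a < i \<and> i < k \<longrightarrow> v \<notin> set (pss!i)))"
proof (induction k)
  case 0
  then show ?case by simp
next
  case (Suc k)
  show ?case
  proof (cases "v \<in> set (pss!k)")
    case True
    have "(a < Suc k \<and> v \<in> set (pss ! a) \<and> (\<forall>i. a < i \<and> i < Suc k \<longrightarrow> v \<notin> set (pss ! i))) \<longleftrightarrow> a = k"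
      using True by (auto simp: less_Suc_eq)
    then show ?thesis using True by auto
  next
    case False
    then show ?thesis using Suc
      by (auto simp: less_Suc_eq)
  qed
qed

definition pk :: "'v list list \<Rightarrow> (bool \<times> nat) list \<Rightarrow> nat \<Rightarrow> 'v" where
  "pk pss cs i = pick (pss!i) (snd (cs!i))"

definition lnk :: "nat \<Rightarrow> 'v list list \<Rightarrow> (bool \<times> nat) list \<Rightarrow> nat \<Rightarrow> nat \<Rightarrow> bool" where
  "lnk d pss cs a b = (a < b \<and> b < length pss \<and> length (pss!a) = 2 \<and> length (pss!b) = 2 \<and>
     fst (cs!a) \<and> \<not> fst (cs!b) \<and> pk pss cs a = pk pss cs b \<and>
     (\<forall>i. a < i \<and> i < b \<longrightarrow> pk pss cs b \<notin> set (pss!i)) \<and> b \<le> a + d - 1)"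

definition C :: "'v list list \<Rightarrow> (bool \<times> nat) list \<Rightarrow> 'v list \<Rightarrow> nat \<Rightarrow> nat \<Rightarrow> bool" where
  "C pss cs s a b = ((s!b = pk pss cs b) \<noteq> (s!a = pk pss cs b))"

definition base :: "'v list list \<Rightarrow> 'v list \<Rightarrow> nat \<Rightarrow> real" where
  "base pss s k = (if length (pss!k) = 1 then (if s!k = pss!k!0 then 1/4 else 0)
      else (if s!k \<in> set (pss!k) then 1/8 else 0))"

definition rf :: "nat \<Rightarrow> 'v list list \<Rightarrow> (bool \<times> nat) list \<Rightarrow> 'v list \<Rightarrow> nat \<Rightarrow> real" where
  "rf d pss cs s k = (if \<exists>a. lnk d pss cs a k then (if \<forall>a. lnk d pss cs a k \<longrightarrow> C pss cs s a k then 2 else 0) else 1)"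

lemma pick_in2: "length ps = 2 \<Longrightarrow> pick ps m \<in> set ps"
  by (auto simp: pick_def set2)

lemma lnk_uniq_left: "lnk d pss cs a k \<Longrightarrow> lnk d pss cs a' k \<Longrightarrow> a = a'"
  unfolding lnk_def
  by (metis linorder_neqE_nat pick_in2 pk_def)

lemma lnk_uniq_right: "lnk d pss cs a k \<Longrightarrow> lnk d pss cs a k' \<Longrightarrow> k = k'"
  unfolding lnk_def
  by (metis linorder_neqE_nat pick_in2 pk_def)

lemma fac_closed:
  assumes wf: "\<forall>ps\<in>set pss. wfps ps" and k: "k < length pss" and d: "d \<ge> 1"
  shows "fac d j pss (\<lambda>_ _. Unk) cs s k = base pss s k * rf d pss cs s k"
proof -
  have wk: "wfps (pss!k)" using wf k by auto
  show ?thesis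
  proof (cases "length (pss!k) = 1")
    case True
    then have "\<not> lnk d pss cs a k" for a by (auto simp: lnk_def)
    then show ?thesis using True by (simp add: fac_def fval_def base_def rf_def)
  next
    case False
    then have l2: "length (pss!k) = 2" and dd: "pss!k!0 \<noteq> pss!k!1" using wk by (auto simp: wfps_def)
    have st: "set (pss!k) = {pss!k!0, pss!k!1}" using set2[OF l2] .
    show ?thesis
    proof (cases "fst (cs!k)")
      case True
      then have "\<not> lnk d pss cs a k" for a by (auto simp: lnk_def)
      then show ?thesis using True False by (simp add: fac_def fval_def base_def rf_def)
    next
      case rcv: False
      define v where "v = pk pss cs k"
      have vin: "v \<in> set (pss!k)" using l2 by (simp add: v_def pk_def pick_in2)
      have lnk_prev: "prevapp pss k v = Some a" if "lnk d pss cs a k" for a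
        using that unfolding prevapp_Some lnk_def v_def by (metis pick_in2 pk_def)
      show ?thesis
      proof (cases "prevapp pss k v")
        case None
        then have nl: "\<not> lnk d pss cs a k" for a using lnk_prev by fastforce
        have "info d j pss (\<lambda>_ _. Unk) cs s k v = None" using None by (simp add: info_def tinfo_def)
        then show ?thesis using False rcv nl l2 by (simp add: fac_def fval_def base_def rf_def v_def pk_def)
      next
        case (Some a)
        then have pa: "a < k" "v \<in> set (pss!a)" "\<forall>i. a < i \<and> i < k \<longrightarrow> v \<notin> set (pss!i)"
          using Some unfolding prevapp_Some by auto
        show ?thesis
        proof (cases "lnk d pss cs a k")
          case True
          have rfe: "rf d pss cs s k = (if C pss cs s a k then 2 else 0)"
          proof -
            have e1: "\<exists>a. lnk d pss cs a k" using True by blast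
            have e2: "(\<forall>a'. lnk d pss cs a' k \<longrightarrow> C pss cs s a' k) \<longleftrightarrow> C pss cs s a k"
              using True lnk_uniq_left[OF True] by blast
            show ?thesis unfolding rf_def by (simp only: e1 e2 if_True)
          qed
          have "info d j pss (\<lambda>_ _. Unk) cs s k v = Some (s!a = v)" using Some True d
            by (auto simp: info_def lnk_def v_def pk_def)
          then have fe: "fac d j pss (\<lambda>_ _. Unk) cs s k =
              (if s!k = (if s!a = v then other (pss!k) v else v) then 1/4 else 0)"
            using False rcv by (simp add: fac_def fval_def v_def pk_def)
          have vv: "v = pss!k!0 \<or> v = pss!k!1" using vin st by auto
          have xx: "s!k \<in> set (pss!k) \<longleftrightarrow> s!k = pss!k!0 \<or> s!k = pss!k!1" using st by auto
          show ?thesis unfolding fe rfe base_def C_def using False xx dd vv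
            by (simp only: v_def[symmetric] if_False) (auto simp: other_def)
        next
          case nl: False
          then have nl': "\<not> lnk d pss cs a' k" for a'
            using lnk_prev Some by fastforce
          have "info d j pss (\<lambda>_ _. Unk) cs s k v = None" using Some nl pa k l2 rcv d
            by (auto simp: info_def lnk_def v_def pk_def)
          then show ?thesis using False rcv nl' l2 by (simp add: fac_def fval_def base_def rf_def v_def pk_def)
        qed
      qed
    qed
  qed
qed




definition Rset :: "nat \<Rightarrow> 'v list list \<Rightarrow> (bool \<times> nat) list \<Rightarrow> nat set" where
  "Rset d pss cs = {k. \<exists>a. lnk d pss cs a k}"

definition Lset :: "nat \<Rightarrow> 'v list list \<Rightarrow> (bool \<times> nat) list \<Rightarrow> nat set" where
  "Lset d pss cs = {a. \<exists>k. lnk d pss cs a k}"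

lemma Rset_sub: "Rset d pss cs \<subseteq> {..<length pss}" by (auto simp: Rset_def lnk_def)
lemma Lset_sub: "Lset d pss cs \<subseteq> {..<length pss}" by (auto simp: Lset_def lnk_def)

lemma card_RL: "card (Rset d pss cs) = card (Lset d pss cs)"
proof -
  define Lk where "Lk = {(a,b). lnk d pss cs a b}"
  have fL: "Lk \<subseteq> {..<length pss} \<times> {..<length pss}" by (auto simp: Lk_def lnk_def)
  have i1: "inj_on fst Lk" using lnk_uniq_right by (fastforce simp: inj_on_def Lk_def)
  have i2: "inj_on snd Lk" using lnk_uniq_left by (fastforce simp: inj_on_def Lk_def)
  have e1: "fst ` Lk = Lset d pss cs" by (force simp: Lk_def Lset_def image_iff)
  have e2: "snd ` Lk = Rset d pss cs" by (force simp: Lk_def Rset_def image_iff)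
  show ?thesis using card_image[OF i1] card_image[OF i2] e1 e2 by simp
qed

lemma prod_if_zero:
  fixes A :: "nat set"
  assumes "finite A"
  shows "(\<Prod>k\<in>A. if P k then (2::real) else 0) = (if \<forall>k\<in>A. P k then 2 ^ card A else 0)"
proof (cases "\<forall>k\<in>A. P k")
  case True
  then have "(\<Prod>k\<in>A. if P k then (2::real) else 0) = (\<Prod>k\<in>A. 2)" by (intro prod.cong) auto
  then show ?thesis using True by simp
next
  case False
  then show ?thesis using assms by (auto simp: prod_zero_iff)
qed

lemma W_closed:
  assumes wf: "\<forall>ps\<in>set pss. wfps ps" and d: "d \<ge> 1"
  shows "W d j pss (\<lambda>_ _. Unk) cs s = (\<Prod>k<length pss. base pss s k) *
     (if \<forall>a b. lnk d pss cs a b \<longrightarrow> C pss cs s a b then 2 ^ card (Rset d pss cs) else 0)"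
proof -
  have "W d j pss (\<lambda>_ _. Unk) cs s = (\<Prod>k<length pss. base pss s k * rf d pss cs s k)"
    unfolding W_def using fac_closed[OF wf _ d] by (intro prod.cong) auto
  also have "\<dots> = (\<Prod>k<length pss. base pss s k) * (\<Prod>k<length pss. rf d pss cs s k)"
    by (rule prod.distrib)
  also have "(\<Prod>k<length pss. rf d pss cs s k) =
      (\<Prod>k<length pss. if k \<in> Rset d pss cs then (if \<forall>a. lnk d pss cs a k \<longrightarrow> C pss cs s a k then 2 else 0) else 1)"
    by (intro prod.cong) (auto simp: rf_def Rset_def)
  also have "\<dots> = (\<Prod>k\<in>Rset d pss cs. if \<forall>a. lnk d pss cs a k \<longrightarrow> C pss cs s a k then 2 else 0)"
    using Rset_sub[of d pss cs] by (simp add: prod.If_cases Int_absorb1)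
  also have "\<dots> = (if \<forall>k\<in>Rset d pss cs. \<forall>a. lnk d pss cs a k \<longrightarrow> C pss cs s a k then 2 ^ card (Rset d pss cs) else 0)"
    by (rule prod_if_zero[OF finite_subset[OF Rset_sub]]) simp
  also have "(\<forall>k\<in>Rset d pss cs. \<forall>a. lnk d pss cs a k \<longrightarrow> C pss cs s a k) \<longleftrightarrow> (\<forall>a b. lnk d pss cs a b \<longrightarrow> C pss cs s a b)"
    by (auto simp: Rset_def)
  finally show ?thesis .
qed

definition flipr :: "(bool \<times> nat) list \<Rightarrow> (bool \<times> nat) list" where
  "flipr cs = rev (map (\<lambda>c. (\<not> fst c, snd c)) cs)"

lemma between_rev:
  assumes "a < b" "b < n"
  shows "(\<forall>i. a < i \<and> i < b \<longrightarrow> P (n - Suc i)) \<longleftrightarrow> (\<forall>i. n - Suc b < i \<and> i < n - Suc a \<longrightarrow> P i)"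
proof
  assume H: "\<forall>i. a < i \<and> i < b \<longrightarrow> P (n - Suc i)"
  show "\<forall>i. n - Suc b < i \<and> i < n - Suc a \<longrightarrow> P i"
  proof (intro allI impI)
    fix i assume "n - Suc b < i \<and> i < n - Suc a"
    then have "a < n - Suc i \<and> n - Suc i < b" "n - Suc (n - Suc i) = i" using assms by auto
    then show "P i" using H by metis
  qed
next
  assume H: "\<forall>i. n - Suc b < i \<and> i < n - Suc a \<longrightarrow> P i"
  show "\<forall>i. a < i \<and> i < b \<longrightarrow> P (n - Suc i)"
  proof (intro allI impI)
    fix i assume "a < i \<and> i < b"
    then have "n - Suc b < n - Suc i \<and> n - Suc i < n - Suc a" using assms by auto
    then show "P (n - Suc i)" using H by blast
  qed
qed

lemma lnk_rev:
  assumes "length cs = length pss"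
  shows "lnk d (rev pss) (flipr cs) a b \<longleftrightarrow>
    (b < length pss \<and> lnk d pss cs (length pss - Suc b) (length pss - Suc a))"
proof (cases "a < b \<and> b < length pss")
  case False
  then show ?thesis by (auto simp: lnk_def)
next
  case True
  define n where "n = length pss"
  have ab: "a < b" "b < n" using True by (auto simp: n_def)
  have rn: "rev pss ! i = pss ! (n - Suc i)" if "i < n" for i using that by (simp add: rev_nth n_def)
  have fn: "flipr cs ! i = (\<not> fst (cs ! (n - Suc i)), snd (cs ! (n - Suc i)))" if "i < n" for i
    using that assms by (simp add: flipr_def rev_nth n_def)
  have pkr: "pk (rev pss) (flipr cs) i = pk pss cs (n - Suc i)" if "i < n" for i
    using rn[OF that] fn[OF that] by (simp add: pk_def)
  have btw: "(\<forall>i. a < i \<and> i < b \<longrightarrow> v \<notin> set (rev pss ! i)) \<longleftrightarrow>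
      (\<forall>i. n - Suc b < i \<and> i < n - Suc a \<longrightarrow> v \<notin> set (pss ! i))" for v
  proof -
    have "(\<forall>i. a < i \<and> i < b \<longrightarrow> v \<notin> set (rev pss ! i)) \<longleftrightarrow>
          (\<forall>i. a < i \<and> i < b \<longrightarrow> v \<notin> set (pss ! (n - Suc i)))"
      using rn ab by (metis less_trans)
    also have "\<dots> \<longleftrightarrow> (\<forall>i. n - Suc b < i \<and> i < n - Suc a \<longrightarrow> v \<notin> set (pss ! i))"
      by (rule between_rev[OF ab])
    finally show ?thesis .
  qed
  have ar: "b \<le> a + d - 1 \<longleftrightarrow> n - Suc a \<le> n - Suc b + d - 1" using ab by auto
  have o1: "n - Suc b < n - Suc a" "n - Suc a < n" using ab by auto
  show ?thesis
    unfolding lnk_def n_def[symmetric] length_rev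
    using ab o1 ar
    apply (simp only: rn fn pkr btw)
    apply auto
    done
qed


lemma Crev:
  assumes "a < length pss" "b < length pss" "length cs = length pss" "length s = length pss"
    and "lnk d pss cs (length pss - Suc b) (length pss - Suc a)"
  shows "C (rev pss) (flipr cs) (rev s) a b = C pss cs s (length pss - Suc b) (length pss - Suc a)"
proof -
  define n where "n = length pss"
  have pkr: "pk (rev pss) (flipr cs) i = pk pss cs (n - Suc i)" if "i < n" for i
    using that assms(3) by (simp add: pk_def flipr_def rev_nth n_def)
  have e: "pk pss cs (n - Suc b) = pk pss cs (n - Suc a)" using assms(5) by (simp add: lnk_def n_def)
  show ?thesis using assms(1,2,4) e unfolding C_def n_def[symmetric]
    by (simp add: pkr rev_nth n_def) blast
qed

lemma cond_rev:
  assumes "length cs = length pss" "length s = length pss"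
  shows "(\<forall>a b. lnk d (rev pss) (flipr cs) a b \<longrightarrow> C (rev pss) (flipr cs) (rev s) a b) \<longleftrightarrow>
         (\<forall>a b. lnk d pss cs a b \<longrightarrow> C pss cs s a b)"
proof
  assume H: "\<forall>a b. lnk d (rev pss) (flipr cs) a b \<longrightarrow> C (rev pss) (flipr cs) (rev s) a b"
  show "\<forall>a b. lnk d pss cs a b \<longrightarrow> C pss cs s a b"
  proof (intro allI impI)
    fix a' b' assume L: "lnk d pss cs a' b'"
    define n where "n = length pss"
    have ab: "a' < b'" "b' < n" using L by (auto simp: lnk_def n_def)
    define a where "a = n - Suc b'"
    define b where "b = n - Suc a'"
    have x: "n - Suc b = a'" "n - Suc a = b'" "b < n" "a < n" using ab by (auto simp: a_def b_def)
    have "lnk d (rev pss) (flipr cs) a b" using lnk_rev[OF assms(1)] L x by (simp add: n_def)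
    then have "C (rev pss) (flipr cs) (rev s) a b" using H by blast
    then show "C pss cs s a' b'" using Crev[OF _ _ assms, of a b d] L x by (simp add: n_def)
  qed
next
  assume H: "\<forall>a b. lnk d pss cs a b \<longrightarrow> C pss cs s a b"
  show "\<forall>a b. lnk d (rev pss) (flipr cs) a b \<longrightarrow> C (rev pss) (flipr cs) (rev s) a b"
  proof (intro allI impI)
    fix a b assume L: "lnk d (rev pss) (flipr cs) a b"
    then have ab: "a < b" "b < length pss" by (auto simp: lnk_def)
    have L2: "lnk d pss cs (length pss - Suc b) (length pss - Suc a)" using L lnk_rev[OF assms(1)] by simp
    then show "C (rev pss) (flipr cs) (rev s) a b" using H Crev[OF _ _ assms L2] ab by simp
  qed
qed

lemma card_Rset_rev:
  assumes "length cs = length pss"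
  shows "card (Rset d (rev pss) (flipr cs)) = card (Rset d pss cs)"
proof -
  define n where "n = length pss"
  have e: "Rset d (rev pss) (flipr cs) = (\<lambda>x. n - Suc x) ` Lset d pss cs"
  proof (intro set_eqI iffI)
    fix k assume "k \<in> Rset d (rev pss) (flipr cs)"
    then obtain a where "lnk d (rev pss) (flipr cs) a k" by (auto simp: Rset_def)
    then have kn: "k < n" and "lnk d pss cs (n - Suc k) (n - Suc a)" using lnk_rev[OF assms] by (auto simp: n_def)
    then have "n - Suc k \<in> Lset d pss cs" by (auto simp: Lset_def)
    moreover have "k = n - Suc (n - Suc k)" using kn by simp
    ultimately show "k \<in> (\<lambda>x. n - Suc x) ` Lset d pss cs" by (rule rev_image_eqI)
  next
    fix k assume "k \<in> (\<lambda>x. n - Suc x) ` Lset d pss cs"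
    then obtain a' b' where L: "lnk d pss cs a' b'" and k: "k = n - Suc a'" by (auto simp: Lset_def)
    have ab: "a' < b'" "b' < n" using L by (auto simp: lnk_def n_def)
    have "lnk d (rev pss) (flipr cs) (n - Suc b') k"
      using lnk_rev[OF assms, of d "n - Suc b'" k] L ab k by (simp add: n_def)
    then show "k \<in> Rset d (rev pss) (flipr cs)" by (auto simp: Rset_def)
  qed
  have i: "inj_on (\<lambda>x. n - Suc x) (Lset d pss cs)"
  proof (rule inj_onI)
    fix x y assume "x \<in> Lset d pss cs" "y \<in> Lset d pss cs" "n - Suc x = n - Suc y"
    moreover have "x < n" "y < n" using calculation Lset_sub[of d pss cs] unfolding n_def by auto
    ultimately show "x = y" by arith
  qed
  show ?thesis unfolding e card_image[OF i] by (rule card_RL[symmetric])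
qed

lemma W_rev:
  assumes wf: "\<forall>ps\<in>set pss. wfps ps" and d: "d \<ge> 1"
    and l: "length cs = length pss" "length s = length pss"
  shows "W d j (rev pss) (\<lambda>_ _. Unk) (flipr cs) (rev s) = W d j pss (\<lambda>_ _. Unk) cs s"
proof -
  have wf': "\<forall>ps\<in>set (rev pss). wfps ps" using wf by simp
  have b: "(\<Prod>k<length (rev pss). base (rev pss) (rev s) k) = (\<Prod>k<length pss. base pss s k)"
  proof -
    have "(\<Prod>k<length (rev pss). base (rev pss) (rev s) k) = (\<Prod>k<length pss. base pss s (length pss - Suc k))"
      using l by (intro prod.cong) (auto simp: base_def rev_nth)
    also have "\<dots> = (\<Prod>k<length pss. base pss s k)" by (rule prod.nat_diff_reindex)
    finally show ?thesis .
  qed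
  show ?thesis unfolding W_closed[OF wf d] W_closed[OF wf' d] b cond_rev[OF l] card_Rset_rev[OF l(1)] ..
qed

lemma flipr_flipr: "flipr (flipr cs) = cs"
  by (simp add: flipr_def rev_map comp_def)

lemma flipr_cfgl: "cs \<in> cfgl n \<Longrightarrow> flipr cs \<in> cfgl n"
  by (auto simp: cfgl_def flipr_def cfgs_def)

lemma run_rev_pmf:
  assumes wf: "\<forall>ps\<in>set pss. wfps ps" and d: "d \<ge> 1"
  shows "pmf (run d j (rev pss) (\<lambda>_ _. Unk)) (rev s) = pmf (run d j pss (\<lambda>_ _. Unk)) s"
proof -
  have wf': "\<forall>ps\<in>set (rev pss). wfps ps" using wf by simp
  have I: "Inv d j (\<lambda>_ _. Unk)" by (simp add: Inv_def)
  show ?thesis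
  proof (cases "length s = length pss")
    case False
    then show ?thesis unfolding runA[OF wf I] runA[OF wf' I] by simp
  next
    case True
    have "(\<Sum>cs\<in>cfgl (length pss). W d j (rev pss) (\<lambda>_ _. Unk) cs (rev s)) =
          (\<Sum>cs\<in>cfgl (length pss). W d j (rev pss) (\<lambda>_ _. Unk) (flipr cs) (rev s))"
      by (rule sum.reindex_bij_witness[where i=flipr and j=flipr]) (auto simp: flipr_flipr flipr_cfgl)
    also have "\<dots> = (\<Sum>cs\<in>cfgl (length pss). W d j pss (\<lambda>_ _. Unk) cs s)"
      using True by (intro sum.cong refl W_rev[OF wf d]) (auto simp: cfgl_def)
    finally show ?thesis unfolding runA[OF wf I] runA[OF wf' I] using True by simp
  qed
qed

lemma map_rev_run:
  assumes wf: "\<forall>ps\<in>set pss. wfps ps" and d: "d \<ge> 1"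
  shows "map_pmf rev (run d j (rev pss) (\<lambda>_ _. Unk)) = run d j pss (\<lambda>_ _. Unk)"
proof (rule pmf_eqI)
  fix x
  have "pmf (map_pmf rev (run d j (rev pss) (\<lambda>_ _. Unk))) x = pmf (run d j (rev pss) (\<lambda>_ _. Unk)) (rev x)"
    using pmf_map_inj'[of rev "run d j (rev pss) (\<lambda>_ _. Unk)" "rev x"] by simp
  then show "pmf (map_pmf rev (run d j (rev pss) (\<lambda>_ _. Unk))) x = pmf (run d j pss (\<lambda>_ _. Unk)) x"
    using run_rev_pmf[OF wf d] by simp
qed



declare matched.simps[simp del]

definition sepd :: "nat \<Rightarrow> nat set \<Rightarrow> bool" where
  "sepd d T = (\<forall>x\<in>T. \<forall>y\<in>T. x < y \<longrightarrow> x + d \<le> y)"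

definition Sset :: "'v list \<Rightarrow> 'v \<Rightarrow> nat set" where
  "Sset sel i = {j. 1 \<le> j \<and> j \<le> length sel \<and> sel!(j-1) = i}"

definition Mset :: "nat \<Rightarrow> 'v list \<Rightarrow> 'v \<Rightarrow> nat set" where
  "Mset d sel i = {j \<in> {1..length sel}. matched d sel i j}"

lemma matchedD: "matched d sel i j \<Longrightarrow> 1 \<le> j \<and> j \<le> length sel \<and> sel!(j-1) = i \<and> (\<forall>t\<in>{j - d<..<j}. \<not> matched d sel i t)"
  by (subst (asm) matched.simps) blast

lemma M_sub: "Mset d sel i \<subseteq> Sset sel i"
  by (auto simp: Mset_def Sset_def dest: matchedD)

lemma M_sep: "sepd d (Mset d sel i)"
  unfolding sepd_def
proof (intro ballI impI)
  fix x y assume x: "x \<in> Mset d sel i" and y: "y \<in> Mset d sel i" and xy: "x < y"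
  have mx: "matched d sel i x" "1 \<le> x" using x by (auto simp: Mset_def)
  have "matched d sel i y" using y by (auto simp: Mset_def)
  then have "\<forall>t\<in>{y - d<..<y}. \<not> matched d sel i t" using matchedD[of d sel i y] by simp
  then have "x \<notin> {y - d<..<y}" using mx by blast
  then have "\<not> (y - d < x)" using xy by simp
  then show "x + d \<le> y" using xy mx by arith
qed

lemma fin_M: "finite (Mset d sel i)" by (simp add: Mset_def)

lemma ahead:
  assumes d: "d \<ge> 1" and sep: "sepd d T" and sub: "T \<subseteq> Sset sel i"
  shows "card (T \<inter> {1..k}) \<le> card (Mset d sel i \<inter> {1..k})"
proof (induction k rule: less_induct)
  case (less k)
  show ?case
  proof (cases "k \<in> T")
    case False
    show ?thesis
    proof (cases k)
      case 0
      then show ?thesis by simp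
    next
      case (Suc k')
      have "T \<inter> {1..k} = T \<inter> {1..k'}" using False Suc by (auto simp: le_Suc_eq)
      then have "card (T \<inter> {1..k}) \<le> card (Mset d sel i \<inter> {1..k'})" using less[of k'] Suc by simp
      also have "\<dots> \<le> card (Mset d sel i \<inter> {1..k})" using Suc by (intro card_mono) auto
      finally show ?thesis .
    qed
  next
    case True
    have kS: "1 \<le> k" "k \<le> length sel" "sel!(k-1) = i" using True sub by (auto simp: Sset_def)
    have eT: "T \<inter> {1..k} = insert k (T \<inter> {1..k-d})"
    proof (intro set_eqI iffI)
      fix x assume "x \<in> T \<inter> {1..k}"
      then have xT: "x \<in> T" "1 \<le> x" "x \<le> k" by auto
      show "x \<in> insert k (T \<inter> {1..k-d})"
      proof (cases "x < k")
        case True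
        then have "x + d \<le> k" using sep xT \<open>k \<in> T\<close> unfolding sepd_def by blast
        then have "x \<le> k - d" by arith
        then show ?thesis using xT by simp
      next
        case False
        then show ?thesis using xT by simp
      qed
    next
      fix x assume "x \<in> insert k (T \<inter> {1..k-d})"
      then show "x \<in> T \<inter> {1..k}" using True kS by auto
    qed
    have kd: "k - d < k" using d kS by auto
    have "card (T \<inter> {1..k}) = Suc (card (T \<inter> {1..k-d}))" unfolding eT using kd by simp
    also have "\<dots> \<le> Suc (card (Mset d sel i \<inter> {1..k-d}))" using less[OF kd] by simp
    also have "\<dots> \<le> card (Mset d sel i \<inter> {1..k})"
    proof -
      obtain m where m: "m \<in> Mset d sel i" "k - d < m" "m \<le> k"
      proof (cases "\<exists>t\<in>{k - d<..<k}. matched d sel i t")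
        case True
        then obtain t where "t \<in> {k - d<..<k}" "matched d sel i t" by blast
        then show ?thesis using that[of t] matchedD[of d sel i t] by (auto simp: Mset_def)
      next
        case False
        then have "matched d sel i k" using kS by (subst matched.simps) blast
        then show ?thesis using that[of k] kS kd by (auto simp: Mset_def)
      qed
      have "insert m (Mset d sel i \<inter> {1..k-d}) \<subseteq> Mset d sel i \<inter> {1..k}" using m
        by (auto simp: Mset_def)
      then have "card (insert m (Mset d sel i \<inter> {1..k-d})) \<le> card (Mset d sel i \<inter> {1..k})"
        by (intro card_mono) auto
      moreover have "m \<notin> Mset d sel i \<inter> {1..k-d}" using m by auto
      ultimately show ?thesis by simp
    qed
    finally show ?thesis .
  qed
qed

lemma card_le_Mset:
  assumes d: "d \<ge> 1" and sep: "sepd d T" and sub: "T \<subseteq> Sset sel i"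
  shows "card T \<le> card (Mset d sel i)"
proof -
  have "T \<inter> {1..length sel} = T" using sub by (auto simp: Sset_def)
  moreover have "Mset d sel i \<inter> {1..length sel} = Mset d sel i" by (auto simp: Mset_def)
  ultimately show ?thesis using ahead[OF assms, of "length sel"] by simp
qed

lemma Mrev_le:
  assumes d: "d \<ge> 1"
  shows "card (Mset d (rev sel) i) \<le> card (Mset d sel i)"
proof -
  define n where "n = length sel"
  define T where "T = (\<lambda>x. n + 1 - x) ` Mset d (rev sel) i"
  have Msub: "Mset d (rev sel) i \<subseteq> Sset (rev sel) i" by (rule M_sub)
  have inj: "inj_on (\<lambda>x. n + 1 - x) (Mset d (rev sel) i)"
  proof (rule inj_onI)
    fix x y assume "x \<in> Mset d (rev sel) i" "y \<in> Mset d (rev sel) i" "n + 1 - x = n + 1 - y"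
    moreover have "x \<le> n" "y \<le> n" using calculation Msub by (auto simp: Sset_def n_def)
    ultimately show "x = y" by arith
  qed
  have cT: "card T = card (Mset d (rev sel) i)" unfolding T_def by (rule card_image[OF inj])
  have sT: "T \<subseteq> Sset sel i"
  proof
    fix y assume "y \<in> T"
    then obtain x where x: "x \<in> Mset d (rev sel) i" "y = n + 1 - x" by (auto simp: T_def)
    then have "1 \<le> x" "x \<le> n" "rev sel ! (x - 1) = i" using Msub by (auto simp: Sset_def n_def)
    then show "y \<in> Sset sel i" using x by (auto simp: Sset_def n_def rev_nth)
  qed
  have sepT: "sepd d T"
    unfolding sepd_def
  proof (intro ballI impI)
    fix a b assume a: "a \<in> T" and b: "b \<in> T" and ab: "a < b"
    obtain x where x: "x \<in> Mset d (rev sel) i" "a = n + 1 - x" using a by (auto simp: T_def)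
    obtain y where y: "y \<in> Mset d (rev sel) i" "b = n + 1 - y" using b by (auto simp: T_def)
    have "x \<le> n" "y \<le> n" using x y Msub by (auto simp: Sset_def n_def)
    then have "y < x" using ab x y by arith
    then have "y + d \<le> x" using M_sep[of d "rev sel" i] x y unfolding sepd_def by blast
    then show "a + d \<le> b" using x y \<open>x \<le> n\<close> \<open>y \<le> n\<close> by arith
  qed
  show ?thesis using card_le_Mset[OF d sepT sT] cT by simp
qed

lemma num_matched_rev:
  assumes "d \<ge> 1"
  shows "num_matched d (rev sel) i = num_matched d sel i"
proof -
  have nm: "\<And>sel'. num_matched d sel' i = card (Mset d sel' i)"
    by (simp add: num_matched_def Mset_def)
  show ?thesis using Mrev_le[OF assms, of sel i] Mrev_le[OF assms, of "rev sel" i] nm[of sel] nm[of "rev sel"] by simp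
qed


lemma enum_set_wf:
  assumes "finite Q" "card Q = 1 \<or> card Q = 2"
  shows "wfps (enum_set Q)"
proof -
  have "\<exists>xs. distinct xs \<and> set xs = Q" using finite_distinct_list[OF assms(1)] by blast
  then have h: "distinct (enum_set Q) \<and> set (enum_set Q) = Q"
    unfolding enum_set_def by (rule someI_ex)
  then have l: "length (enum_set Q) = card Q" using distinct_card by fastforce
  show ?thesis
  proof (cases "card Q = 1")
    case True then show ?thesis using l by (simp add: wfps_def)
  next
    case False
    then have "length (enum_set Q) = 2" using l assms(2) by simp
    then show ?thesis using h by (simp add: wfps_def nth_eq_iff_index_eq)
  qed
qed

theorem claim2:
  fixes V :: "'v set" and d :: nat and Qs :: "'v set list" and i :: 'v
  assumes "finite V" and "d \<ge> 1"
    and "\<forall>Q\<in>set Qs. Q \<subseteq> V \<and> (card Q = 1 \<or> card Q = 2)"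
    and "i \<in> V"
  shows "mu d Qs i = mu d (rev Qs) i"
proof -
  define pss where "pss = map enum_set Qs"
  have wf: "\<forall>ps\<in>set pss. wfps ps"
    using assms(1,3) by (auto simp: pss_def intro!: enum_set_wf dest: finite_subset)
  have e: "map enum_set (rev Qs) = rev pss" by (simp add: pss_def rev_map)
  have "mu d Qs i = measure_pmf.expectation (run d 1 pss (\<lambda>_ _. Unk)) (\<lambda>sel. real (num_matched d sel i))"
    by (simp add: mu_def pss_def)
  also have "\<dots> = measure_pmf.expectation (map_pmf rev (run d 1 (rev pss) (\<lambda>_ _. Unk))) (\<lambda>sel. real (num_matched d sel i))"
    by (simp add: map_rev_run[OF wf assms(2)])
  also have "\<dots> = measure_pmf.expectation (run d 1 (rev pss) (\<lambda>_ _. Unk)) (\<lambda>sel. real (num_matched d (rev sel) i))"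
    by simp
  also have "\<dots> = measure_pmf.expectation (run d 1 (rev pss) (\<lambda>_ _. Unk)) (\<lambda>sel. real (num_matched d sel i))"
    by (simp add: num_matched_rev[OF assms(2)])
  also have "\<dots> = mu d (rev Qs) i" by (simp add: mu_def e)
  finally show ?thesis .
qed

end
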